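(* Let $w$ and $q$ be probability measures on $(\mathsf{Y},\mathcal{Y})$ with $D_\lambda(w\|q)\le\gamma$ for some $\gamma\in\mathbb{R}_+$ and $\lambda\in(1,\infty)$. Then for any $\eta\in(1,\lambda)$, $$0\le D_\eta(w\|q)-D_1(w\|q)\le\frac{2(\eta-1)}{e^2}\Big[1+e^{(\eta-1)\gamma}\Big(\frac{\gamma e^\tau}{2\tau}\Big)^2\Big],\qquad\tau=\frac{(\lambda-\eta)\gamma}{2}\wedge1.$$
   Context: Rényi divergence $D_\alpha(w\|q)=\frac{1}{\alpha-1}\ln E_\nu[(\frac{dw}{d\nu})^\alpha(\frac{dq}{d\nu})^{1-\alpha}]$ for $\alpha\in(0,\infty)\setminus\{1\}$ and $D_1(w\|q)=E_\nu[\frac{dw}{d\nu}\ln\frac{dw/d\nu}{dq/d\nu}]$, $\nu$ any dominating probability measure. *)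

theory Defs
  imports "HOL-Probability.Probability"
begin

definition renyi_integrand :: "real \<Rightarrow> real \<Rightarrow> real \<Rightarrow> ennreal" where
  "renyi_integrand \<alpha> p q =
     (if p = 0 \<and> q = 0 then 0
      else if q = 0 \<and> \<alpha> > 1 then \<infinity>
      else ennreal (p powr \<alpha> * q powr (1 - \<alpha>)))"

definition kl_integrand :: "real \<Rightarrow> real \<Rightarrow> ereal" where
  "kl_integrand p q =
     (if p = 0 then 0 else if q = 0 then \<infinity> else ereal (p * ln (p / q)))"

text \<open>Renyi divergence D_alpha(w||q), computed w.r.t. a dominating probability measure nu. For alpha <> 1:  1/(alpha-1) ln E_nu[p^alpha q^(1-alpha)],
  with ln infinity = infinity and ln 0 = -infinity. For alpha = 1: E_nu[p ln(p/q)]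
  (Lebesgue integral of an extended-real function: positive part minus negative part).\<close>
definition renyi_div :: "real \<Rightarrow> 'a measure \<Rightarrow> 'a measure \<Rightarrow> 'a measure \<Rightarrow> ereal" where
  "renyi_div \<alpha> \<nu> w q =
     (let p = (\<lambda>x. enn2real (RN_deriv \<nu> w x));
          r = (\<lambda>x. enn2real (RN_deriv \<nu> q x))
      in if \<alpha> = 1 then
           enn2ereal (\<integral>\<^sup>+ x. e2ennreal (kl_integrand (p x) (r x)) \<partial>\<nu>)
           - enn2ereal (\<integral>\<^sup>+ x. e2ennreal (- kl_integrand (p x) (r x)) \<partial>\<nu>)
         else
           (let I = (\<integral>\<^sup>+ x. renyi_integrand \<alpha> (p x) (r x) \<partial>\<nu>)
            in if I = \<infinity> then (if \<alpha> > 1 then \<infinity> else -\<infinity>)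
               else if I = 0 then (if \<alpha> > 1 then -\<infinity> else \<infinity>)
               else ereal (ln (enn2real I) / (\<alpha> - 1))))"

end

theory Submission
  imports Defs
begin

lemma exp_amgm:
  fixes \<theta> y :: real assumes "0 \<le> \<theta>" "\<theta> \<le> 1"
  shows "exp (\<theta> * y) \<le> \<theta> * exp y + (1 - \<theta>)"
proof -
  have c: "convex_on UNIV exp" using convex_on_exp[of 1] by simp
  have "exp ((1 - \<theta>) * 0 + \<theta> * y) \<le> (1 - \<theta>) * exp 0 + \<theta> * exp y"
    using convex_onD[OF c, of \<theta> 0 y] assms by simp
  thus ?thesis by simp
qed

lemma exp_taylor_neg: fixes x :: real assumes "x \<le> 0"
  shows "exp x - 1 - x \<le> x^2 / 2"
proof (cases "x = 0")
  case False
  hence "x < 0" using assms by simp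
  from Maclaurin_minus[of x 2 "\<lambda>_. exp" exp, OF this]
  obtain t where t: "t < 0" "exp x = (\<Sum>m<2. exp 0 / fact m * x ^ m) + exp t / fact 2 * x ^ 2"
    by (auto intro: DERIV_exp)
  have "exp t \<le> 1" using t by simp
  hence "exp t * x^2 \<le> x^2" by (simp add: mult_left_le_one_le)
  hence "exp t / 2 * x^2 \<le> x^2/2" by simp
  thus ?thesis using t by (simp add: numeral_2_eq_2)
qed simp

lemma exp_taylor_pos: fixes x :: real assumes "0 \<le> x"
  shows "exp x - 1 - x \<le> x^2 / 2 * exp x"
proof -
  obtain t where t: "\<bar>t\<bar> \<le> \<bar>x\<bar>" "exp x = (\<Sum>m<2. (x ^ m) / fact m) + (exp t / fact 2) * x ^ 2"
    using Maclaurin_exp_le[of x 2] by blast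
  have "t \<le> x" using t assms by simp
  hence "exp t \<le> exp x" by simp
  hence "exp t / 2 * x^2 \<le> exp x / 2 * x^2" by (simp add: mult_right_mono)
  moreover have "exp x - 1 - x = exp t / 2 * x^2" using t(2) by (simp add: numeral_2_eq_2)
  ultimately show ?thesis by (simp add: algebra_simps)
qed

lemma sq_exp_bound: fixes v s :: real assumes "0 \<le> v" "0 < s"
  shows "v^2 * exp (- (s * v)) \<le> (2 / (s * exp 1))^2"
proof -
  have "1 + (s * v / 2 - 1) \<le> exp (s * v / 2 - 1)" by (rule exp_ge_add_one_self)
  hence "s * v / 2 \<le> exp (s * v / 2) / exp 1" by (simp add: exp_diff)
  hence "v \<le> 2 / (s * exp 1) * exp (s * v / 2)" using assms by (simp add: field_simps)
  hence "v * exp (-(s * v / 2)) \<le> 2 / (s * exp 1)"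
    by (simp add: exp_minus field_simps)
  moreover have "0 \<le> v * exp (-(s * v / 2))" using assms by simp
  ultimately have "(v * exp (-(s * v / 2)))^2 \<le> (2 / (s * exp 1))^2"
    by (rule power_mono)
  moreover have "(v * exp (-(s * v / 2)))^2 = v^2 * exp (- (s * v))"
    by (simp add: power_mult_distrib power2_eq_square flip: exp_add)
  ultimately show ?thesis by simp
qed

definition ff :: "real \<Rightarrow> real \<Rightarrow> real \<Rightarrow> real" where
  "ff \<alpha> p r = p powr \<alpha> * r powr (1 - \<alpha>)"
definition kk :: "real \<Rightarrow> real \<Rightarrow> real" where
  "kk p r = p * ln (p / r)"

lemma ff_pos: assumes "0 < p" "0 < r"
  shows "ff \<alpha> p r = p * exp ((\<alpha> - 1) * ln (p / r))"
proof -
  have "ff \<alpha> p r = exp (\<alpha> * ln p + (1 - \<alpha>) * ln r)"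
    using assms by (simp add: ff_def powr_def exp_add)
  also have "\<alpha> * ln p + (1 - \<alpha>) * ln r = ln p + (\<alpha> - 1) * ln (p / r)"
    using assms by (simp add: ln_div algebra_simps)
  finally show ?thesis using assms by (simp add: exp_add)
qed

lemma ff_zero: "ff \<alpha> 0 r = 0" by (simp add: ff_def)
lemma kk_zero: "kk 0 r = 0" by (simp add: kk_def)

lemma ff_nonneg: "0 \<le> p \<Longrightarrow> 0 \<le> r \<Longrightarrow> 0 \<le> ff \<alpha> p r"
  by (simp add: ff_def)

lemma pw_lower: assumes "0 \<le> p" "0 \<le> r" "0 < p \<longrightarrow> 0 < r"
  shows "exp c * (p + a * kk p r - c * p) \<le> ff (1 + a) p r"
proof (cases "p = 0")
  case True thus ?thesis by (simp add: ff_zero kk_zero)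
next
  case False
  hence pr: "0 < p" "0 < r" using assms by auto
  define L where "L = ln (p / r)"
  have "1 + (a * L - c) \<le> exp (a * L - c)" by (rule exp_ge_add_one_self)
  hence "exp c * (1 + a * L - c) \<le> exp (a * L)"
    by (simp add: exp_diff field_simps)
  hence "p * (exp c * (1 + a * L - c)) \<le> p * exp (a * L)"
    using pr by (simp add: mult_left_mono)
  thus ?thesis using pr by (simp add: ff_pos kk_def L_def algebra_simps)
qed

lemma pw_upper: assumes "0 \<le> p" "0 \<le> r" "0 < p \<longrightarrow> 0 < r" "0 < a" "0 < s"
  shows "ff (1 + a) p r - p - a * kk p r
     \<le> a^2 * (2 / exp 1 ^ 2) * r + a^2 * (2 / (s^2 * exp 1 ^ 2)) * ff (1 + a + s) p r"
proof (cases "p = 0")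
  case True thus ?thesis using assms by (simp add: ff_zero kk_zero)
next
  case False
  hence pr: "0 < p" "0 < r" using assms by auto
  define L where "L = ln (p / r)"
  have pL: "p = r * exp L" using pr by (simp add: L_def)
  have lhs: "ff (1 + a) p r - p - a * kk p r = p * (exp (a * L) - 1 - a * L)"
    using pr by (simp add: ff_pos kk_def L_def algebra_simps)
  have t2: "0 \<le> a^2 * (2 / (s^2 * exp 1 ^ 2)) * ff (1 + a + s) p r"
    using pr by (simp add: ff_nonneg)
  show ?thesis
  proof (cases "L \<le> 0")
    case True
    have "exp (a * L) - 1 - a * L \<le> (a * L)^2 / 2"
      using True assms by (intro exp_taylor_neg) (simp add: mult_nonneg_nonpos)
    hence "p * (exp (a * L) - 1 - a * L) \<le> p * ((a * L)^2 / 2)"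
      using pr by (simp add: mult_left_mono)
    also have "\<dots> = a^2 / 2 * r * ((-L)^2 * exp (- (1 * (-L))))"
      by (simp add: pL power_mult_distrib)
    also have "\<dots> \<le> a^2 / 2 * r * (2 / (1 * exp 1))^2"
      using True pr by (intro mult_left_mono sq_exp_bound) auto
    also have "\<dots> = a^2 * (2 / exp 1 ^ 2) * r"
      by (simp add: power_divide field_simps)
    finally show ?thesis using lhs t2 by linarith
  next
    case False
    have "exp (a * L) - 1 - a * L \<le> (a * L)^2 / 2 * exp (a * L)"
      using False assms by (intro exp_taylor_pos) simp
    hence "p * (exp (a * L) - 1 - a * L) \<le> p * ((a * L)^2 / 2 * exp (a * L))"
      using pr by (simp add: mult_left_mono)
    also have "\<dots> = a^2 / 2 * (p * exp ((a + s) * L)) * (L^2 * exp (- (s * L)))"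
      by (simp add: power_mult_distrib algebra_simps flip: exp_add)
    also have "\<dots> \<le> a^2 / 2 * (p * exp ((a + s) * L)) * (2 / (s * exp 1))^2"
      using False pr assms by (intro mult_left_mono sq_exp_bound) auto
    also have "\<dots> = a^2 * (2 / (s^2 * exp 1 ^ 2)) * ff (1 + a + s) p r"
      using pr by (simp add: ff_pos L_def power_divide field_simps power_mult_distrib)
    moreover have "0 \<le> a^2 * (2 / exp 1 ^ 2) * r" using pr by simp
    ultimately show ?thesis using lhs by linarith
  qed
qed

lemma pw_amgm: assumes "0 \<le> p" "0 \<le> r" "0 < p \<longrightarrow> 0 < r" "0 \<le> \<theta>" "\<theta> \<le> 1"
  shows "ff (1 + \<theta> * l) p r \<le> \<theta> * exp (\<theta> * B - B) * ff (1 + l) p r + (1 - \<theta>) * exp (\<theta> * B) * p"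
proof (cases "p = 0")
  case True thus ?thesis by (simp add: ff_zero)
next
  case False
  hence pr: "0 < p" "0 < r" using assms by auto
  define L where "L = ln (p / r)"
  have "exp (\<theta> * (l * L - B)) \<le> \<theta> * exp (l * L - B) + (1 - \<theta>)"
    using assms by (intro exp_amgm)
  hence "exp (\<theta> * B) * exp (\<theta> * (l * L - B)) \<le> exp (\<theta> * B) * (\<theta> * exp (l * L - B) + (1 - \<theta>))"
    by (simp add: mult_left_mono)
  hence "exp (\<theta> * l * L) \<le> \<theta> * exp (\<theta> * B - B) * exp (l * L) + (1 - \<theta>) * exp (\<theta> * B)"
    by (simp add: algebra_simps flip: exp_add exp_diff)
  hence "p * exp (\<theta> * l * L) \<le> p * (\<theta> * exp (\<theta> * B - B) * exp (l * L) + (1 - \<theta>) * exp (\<theta> * B))"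
    using pr by (simp add: mult_left_mono)
  thus ?thesis using pr by (simp add: ff_pos L_def algebra_simps)
qed

lemma pw_kk_bound: assumes "0 \<le> p" "0 \<le> r" "0 < p \<longrightarrow> 0 < r" "0 < l"
  shows "\<bar>kk p r\<bar> \<le> r + ff (1 + l) p r / l"
proof (cases "p = 0")
  case True thus ?thesis using assms by (simp add: ff_zero kk_zero)
next
  case False
  hence pr: "0 < p" "0 < r" using assms by auto
  define L where "L = ln (p / r)"
  have pL: "p = r * exp L" using pr by (simp add: L_def)
  have f0: "0 \<le> ff (1 + l) p r / l" using pr assms by (simp add: ff_nonneg)
  show ?thesis
  proof (cases "L \<le> 0")
    case True
    have "- L \<le> exp (- L) - 1" using exp_ge_add_one_self[of "-L"] by simp
    hence "exp L * (- L) \<le> exp L * (exp (- L) - 1)" by (intro mult_left_mono) auto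
    hence "exp L * (- L) \<le> 1 - exp L" by (simp add: algebra_simps exp_minus)
    hence "exp L * (- L) \<le> 1" by (smt (verit) exp_gt_zero)
    hence "r * (exp L * (- L)) \<le> r * 1" using pr by (intro mult_left_mono) auto
    moreover have "\<bar>kk p r\<bar> = r * (exp L * (- L))"
      using True pr by (simp add: kk_def L_def[symmetric] pL abs_mult mult_nonneg_nonpos)
    ultimately show ?thesis using f0 by linarith
  next
    case False
    have "l * L \<le> exp (l * L)" using exp_ge_add_one_self[of "l * L"] by linarith
    hence "p * (l * L) \<le> p * exp (l * L)" using pr by (simp add: mult_left_mono)
    hence "p * L \<le> p * exp (l * L) / l" using assms by (simp add: field_simps)
    moreover have "\<bar>kk p r\<bar> = p * L" using False pr by (simp add: kk_def L_def)
    moreover have "ff (1 + l) p r = p * exp (l * L)" using pr by (simp add: ff_pos L_def)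
    ultimately show ?thesis using pr by simp
  qed
qed

lemma RN_density_int:
  assumes "prob_space M" "prob_space N" "sets N = sets M" "absolutely_continuous M N"
  shows "integrable M (\<lambda>x. enn2real (RN_deriv M N x)) \<and> (\<integral>x. enn2real (RN_deriv M N x) \<partial>M) = 1"
proof -
  interpret M: prob_space M by fact
  interpret N: prob_space N by fact
  have ae: "AE x in M. RN_deriv M N x = ennreal (enn2real (RN_deriv M N x))"
    using M.RN_deriv_finite[OF N.sigma_finite_measure_axioms assms(4,3)]
    by eventually_elim (auto simp: less_top)
  have "(\<integral>\<^sup>+x. ennreal (enn2real (RN_deriv M N x)) \<partial>M) = (\<integral>\<^sup>+x. RN_deriv M N x \<partial>M)"
    using ae by (intro nn_integral_cong_AE) auto
  also have "\<dots> = emeasure (density M (RN_deriv M N)) (space M)"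
    by (auto simp: emeasure_density intro!: nn_integral_cong)
  also have "density M (RN_deriv M N) = N" using M.density_RN_deriv assms by blast
  also have "emeasure N (space M) = 1" using sets_eq_imp_space_eq[OF assms(3)] N.emeasure_space_1 by simp
  finally have "(\<integral>\<^sup>+x. ennreal (enn2real (RN_deriv M N x)) \<partial>M) = ennreal 1" by simp
  thus ?thesis by (subst (asm) nn_integral_eq_integrable) auto
qed

lemma integral_pos_neg:
  fixes f :: "'a \<Rightarrow> real"
  assumes f: "integrable M f"
  shows "enn2ereal (\<integral>\<^sup>+x. ennreal (f x) \<partial>M) - enn2ereal (\<integral>\<^sup>+x. ennreal (- f x) \<partial>M) = ereal (\<integral>x. f x \<partial>M)"
proof -
  have n: "(\<integral>\<^sup>+ x. ennreal (norm (f x)) \<partial>M) < \<infinity>" using f unfolding integrable_iff_bounded by simp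
  have "(\<integral>\<^sup>+x. ennreal (f x) \<partial>M) \<le> (\<integral>\<^sup>+ x. ennreal (norm (f x)) \<partial>M)"
    by (intro nn_integral_mono) (simp add: ennreal_leI)
  hence a: "(\<integral>\<^sup>+x. ennreal (f x) \<partial>M) < \<infinity>" using n by (meson le_less_trans)
  have "(\<integral>\<^sup>+x. ennreal (- f x) \<partial>M) \<le> (\<integral>\<^sup>+ x. ennreal (norm (f x)) \<partial>M)"
    by (intro nn_integral_mono) (simp add: ennreal_leI)
  hence b: "(\<integral>\<^sup>+x. ennreal (- f x) \<partial>M) < \<infinity>" using n by (meson le_less_trans)
  have e: "\<And>a. a < \<infinity> \<Longrightarrow> enn2ereal a = ereal (enn2real a)"
  proof -
    fix a :: ennreal assume "a < \<infinity>"
    thus "enn2ereal a = ereal (enn2real a)" by (cases a rule: ennreal_cases) (auto simp: enn2ereal_ennreal)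
  qed
  have "enn2ereal (\<integral>\<^sup>+x. ennreal (f x) \<partial>M) - enn2ereal (\<integral>\<^sup>+x. ennreal (- f x) \<partial>M)
     = ereal (enn2real (\<integral>\<^sup>+x. ennreal (f x) \<partial>M)) - ereal (enn2real (\<integral>\<^sup>+x. ennreal (- f x) \<partial>M))"
    using e[OF a] e[OF b] by simp
  also have "\<dots> = ereal (\<integral>x. f x \<partial>M)" by (simp add: real_lebesgue_integral_def[OF f])
  finally show ?thesis .
qed

lemma alg_helper: fixes a d E Y :: real
  shows "d + a^2 * (2 / E) + a^2 * (2 / E) * Y = d + a * (2 * a / E * (1 + Y))"
proof -
  have "a * (2 * a / E * (1 + Y)) = a^2 * (2 / E) * (1 + Y)" by (simp add: power2_eq_square)
  also have "\<dots> = a^2 * (2 / E) + a^2 * (2 / E) * Y" by (simp add: distrib_left)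
  finally show ?thesis by simp
qed

theorem lemma26:
  fixes \<nu> w q :: "'a measure" and \<gamma> lam \<eta> :: real
  assumes "prob_space w" and "prob_space q" and "prob_space \<nu>"
    and "sets w = sets \<nu>" and "sets q = sets \<nu>"
    and "absolutely_continuous \<nu> w" and "absolutely_continuous \<nu> q"
    and "\<gamma> > 0" and "lam > 1"
    and "renyi_div lam \<nu> w q \<le> ereal \<gamma>"
    and "1 < \<eta>" and "\<eta> < lam"
  shows "0 \<le> renyi_div \<eta> \<nu> w q - renyi_div 1 \<nu> w q
    \<and> renyi_div \<eta> \<nu> w q - renyi_div 1 \<nu> w q
        \<le> ereal (let \<tau> = min ((lam - \<eta>) * \<gamma> / 2) 1 in
             2 * (\<eta> - 1) / exp 2 * (1 + exp ((\<eta> - 1) * \<gamma>) * (\<gamma> * exp \<tau> / (2 * \<tau>))\<^sup>2))"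
proof -
  interpret V: prob_space \<nu> by fact
  define p where "p = (\<lambda>x. enn2real (RN_deriv \<nu> w x))"
  define r where "r = (\<lambda>x. enn2real (RN_deriv \<nu> q x))"
  have rd: "\<And>\<alpha>. renyi_div \<alpha> \<nu> w q = (if \<alpha> = 1 then
           enn2ereal (\<integral>\<^sup>+ x. e2ennreal (kl_integrand (p x) (r x)) \<partial>\<nu>)
           - enn2ereal (\<integral>\<^sup>+ x. e2ennreal (- kl_integrand (p x) (r x)) \<partial>\<nu>)
         else (if (\<integral>\<^sup>+ x. renyi_integrand \<alpha> (p x) (r x) \<partial>\<nu>) = \<infinity> then (if \<alpha> > 1 then \<infinity> else -\<infinity>)
               else if (\<integral>\<^sup>+ x. renyi_integrand \<alpha> (p x) (r x) \<partial>\<nu>) = 0 then (if \<alpha> > 1 then -\<infinity> else \<infinity>)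
               else ereal (ln (enn2real (\<integral>\<^sup>+ x. renyi_integrand \<alpha> (p x) (r x) \<partial>\<nu>)) / (\<alpha> - 1))))"
    unfolding renyi_div_def Let_def p_def r_def by simp
  have pm[measurable]: "p \<in> borel_measurable \<nu>" unfolding p_def by measurable
  have rm[measurable]: "r \<in> borel_measurable \<nu>" unfolding r_def by measurable
  have p0: "\<And>x. 0 \<le> p x" "\<And>x. 0 \<le> r x" by (simp_all add: p_def r_def)
  have ip: "integrable \<nu> p" "integral\<^sup>L \<nu> p = 1"
    using RN_density_int[OF assms(3,1,4,6)] unfolding p_def by auto
  have ir: "integrable \<nu> r" "integral\<^sup>L \<nu> r = 1"
    using RN_density_int[OF assms(3,2,5,7)] unfolding r_def by auto
  have rim[measurable]: "\<And>\<alpha>. (\<lambda>x. renyi_integrand \<alpha> (p x) (r x)) \<in> borel_measurable \<nu>"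
    unfolding renyi_integrand_def by measurable
  have ffm[measurable]: "\<And>\<alpha>. (\<lambda>x. ff \<alpha> (p x) (r x)) \<in> borel_measurable \<nu>"
    unfolding ff_def by measurable
  have kkm[measurable]: "(\<lambda>x. kk (p x) (r x)) \<in> borel_measurable \<nu>"
    unfolding kk_def by measurable
  have Ifin: "(\<integral>\<^sup>+ x. renyi_integrand lam (p x) (r x) \<partial>\<nu>) \<noteq> \<infinity>"
  proof
    assume "(\<integral>\<^sup>+ x. renyi_integrand lam (p x) (r x) \<partial>\<nu>) = \<infinity>"
    hence "renyi_div lam \<nu> w q = \<infinity>" using assms(9) by (subst rd) simp
    thus False using assms(10) by simp
  qed
  have pr: "AE x in \<nu>. 0 < p x \<longrightarrow> 0 < r x"
    using nn_integral_PInf_AE[OF rim Ifin]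
  proof eventually_elim
    case (elim x) thus ?case using p0[of x] assms(9) by (cases "r x = 0") (auto simp: renyi_integrand_def split: if_split_asm)
  qed
  have rf: "\<And>\<alpha>. 1 < \<alpha> \<Longrightarrow> AE x in \<nu>. renyi_integrand \<alpha> (p x) (r x) = ennreal (ff \<alpha> (p x) (r x))"
    using pr
  proof eventually_elim
    case (elim \<alpha> x) thus ?case using p0[of x] by (auto simp: renyi_integrand_def ff_def)
  qed
  have rdI: "renyi_div \<alpha> \<nu> w q = ereal (ln (integral\<^sup>L \<nu> (\<lambda>x. ff \<alpha> (p x) (r x))) / (\<alpha> - 1))"
    if "1 < \<alpha>" "integrable \<nu> (\<lambda>x. ff \<alpha> (p x) (r x))" "0 < integral\<^sup>L \<nu> (\<lambda>x. ff \<alpha> (p x) (r x))" for \<alpha>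
  proof -
    have "(\<integral>\<^sup>+ x. renyi_integrand \<alpha> (p x) (r x) \<partial>\<nu>) = (\<integral>\<^sup>+ x. ennreal (ff \<alpha> (p x) (r x)) \<partial>\<nu>)"
      using rf[OF that(1)] by (intro nn_integral_cong_AE) auto
    also have "\<dots> = ennreal (integral\<^sup>L \<nu> (\<lambda>x. ff \<alpha> (p x) (r x)))"
      using that p0 by (intro nn_integral_eq_integral) (auto simp: ff_nonneg)
    finally show ?thesis using that by (subst rd) simp
  qed
  define A where "A = integral\<^sup>L \<nu> (\<lambda>x. ff lam (p x) (r x))"
  have ilam: "integrable \<nu> (\<lambda>x. ff lam (p x) (r x))"
  proof -
    have "(\<integral>\<^sup>+ x. renyi_integrand lam (p x) (r x) \<partial>\<nu>) = (\<integral>\<^sup>+ x. ennreal (ff lam (p x) (r x)) \<partial>\<nu>)"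
      using rf[OF assms(9)] by (intro nn_integral_cong_AE) auto
    hence "(\<integral>\<^sup>+ x. ennreal (ff lam (p x) (r x)) \<partial>\<nu>) = ennreal (enn2real (\<integral>\<^sup>+ x. renyi_integrand lam (p x) (r x) \<partial>\<nu>))"
      using Ifin by (simp add: ennreal_enn2real less_top)
    thus ?thesis using p0 by (intro integrableI_nn_integral_finite) (auto simp: ff_nonneg)
  qed
  have ik0: "integrable \<nu> (\<lambda>x. r x + ff lam (p x) (r x) / (lam - 1))" using ir ilam by auto
  have ik: "integrable \<nu> (\<lambda>x. kk (p x) (r x))"
  proof (rule Bochner_Integration.integrable_bound[OF ik0])
    show "AE x in \<nu>. norm (kk (p x) (r x)) \<le> norm (r x + ff lam (p x) (r x) / (lam - 1))"
      using pr
    proof eventually_elim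
      case (elim x)
      have "\<bar>kk (p x) (r x)\<bar> \<le> r x + ff (1 + (lam - 1)) (p x) (r x) / (lam - 1)"
        using elim p0[of x] assms(9) by (intro pw_kk_bound) auto
      moreover have "0 \<le> ff lam (p x) (r x) / (lam - 1)" using p0[of x] assms(9) by (simp add: ff_nonneg)
      ultimately show ?case using p0[of x] by simp
    qed
  qed simp
  define D1 where "D1 = integral\<^sup>L \<nu> (\<lambda>x. kk (p x) (r x))"
  have rd1: "renyi_div 1 \<nu> w q = ereal D1"
  proof -
    have k1: "AE x in \<nu>. e2ennreal (kl_integrand (p x) (r x)) = ennreal (kk (p x) (r x))"
      using pr
    proof eventually_elim
      case (elim x) thus ?case using p0[of x] by (cases "p x = 0") (auto simp: kl_integrand_def kk_def)
    qed
    have k2: "AE x in \<nu>. e2ennreal (- kl_integrand (p x) (r x)) = ennreal (- kk (p x) (r x))"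
      using pr
    proof eventually_elim
      case (elim x) thus ?case using p0[of x] by (cases "p x = 0") (auto simp: kl_integrand_def kk_def)
    qed
    show ?thesis
      by (subst rd) (simp add: nn_integral_cong_AE[OF k1] nn_integral_cong_AE[OF k2] integral_pos_neg[OF ik] D1_def)
  qed
  have lower: "exp ((\<alpha> - 1) * D1) \<le> integral\<^sup>L \<nu> (\<lambda>x. ff \<alpha> (p x) (r x))"
    if "integrable \<nu> (\<lambda>x. ff \<alpha> (p x) (r x))" for \<alpha>
  proof -
    define c where "c = (\<alpha> - 1) * D1"
    have "integral\<^sup>L \<nu> (\<lambda>x. exp c * (p x + (\<alpha> - 1) * kk (p x) (r x) - c * p x))
        \<le> integral\<^sup>L \<nu> (\<lambda>x. ff \<alpha> (p x) (r x))"
    proof (rule integral_mono_AE)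
      show "integrable \<nu> (\<lambda>x. exp c * (p x + (\<alpha> - 1) * kk (p x) (r x) - c * p x))"
        using ip ik by auto
      show "AE x in \<nu>. exp c * (p x + (\<alpha> - 1) * kk (p x) (r x) - c * p x) \<le> ff \<alpha> (p x) (r x)"
        using pr
      proof eventually_elim
        case (elim x) thus ?case using pw_lower[of "p x" "r x" c "\<alpha> - 1"] p0[of x] by simp
      qed
    qed fact
    also have "integral\<^sup>L \<nu> (\<lambda>x. exp c * (p x + (\<alpha> - 1) * kk (p x) (r x) - c * p x)) = exp c"
      using ip ik by (simp add: D1_def c_def)
    finally show ?thesis by (simp add: c_def)
  qed
  have Apos: "0 < A" using lower[OF ilam] by (simp add: A_def) (smt (verit) exp_gt_zero)
  have lnA: "ln A \<le> (lam - 1) * \<gamma>"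
  proof -
    have "ereal (ln A / (lam - 1)) \<le> ereal \<gamma>" using rdI[OF assms(9) ilam] Apos assms(10) by (simp add: A_def)
    thus ?thesis using assms(9) by (simp add: field_simps)
  qed
  have mid: "integrable \<nu> (\<lambda>x. ff \<alpha> (p x) (r x)) \<and> integral\<^sup>L \<nu> (\<lambda>x. ff \<alpha> (p x) (r x)) \<le> exp ((\<alpha> - 1) * \<gamma>)"
    if "1 < \<alpha>" "\<alpha> \<le> lam" for \<alpha>
  proof -
    define \<theta> where "\<theta> = (\<alpha> - 1) / (lam - 1)"
    define B where "B = ln A"
    have th: "0 \<le> \<theta>" "\<theta> \<le> 1" "1 + \<theta> * (lam - 1) = \<alpha>" using that assms(9) by (auto simp: \<theta>_def field_simps)
    have bnd: "AE x in \<nu>. ff \<alpha> (p x) (r x) \<le> \<theta> * exp (\<theta> * B - B) * ff lam (p x) (r x) + (1 - \<theta>) * exp (\<theta> * B) * p x"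
      using pr
    proof eventually_elim
      case (elim x) thus ?case using pw_amgm[of "p x" "r x" \<theta> "lam - 1" B] p0[of x] th by simp
    qed
    have ib: "integrable \<nu> (\<lambda>x. \<theta> * exp (\<theta> * B - B) * ff lam (p x) (r x) + (1 - \<theta>) * exp (\<theta> * B) * p x)"
      using ilam ip by auto
    have ia: "integrable \<nu> (\<lambda>x. ff \<alpha> (p x) (r x))"
    proof (rule Bochner_Integration.integrable_bound[OF ib])
      show "AE x in \<nu>. norm (ff \<alpha> (p x) (r x)) \<le> norm (\<theta> * exp (\<theta> * B - B) * ff lam (p x) (r x) + (1 - \<theta>) * exp (\<theta> * B) * p x)"
        using bnd
      proof eventually_elim
        case (elim x) thus ?case using p0[of x] ff_nonneg[of "p x" "r x" \<alpha>] by simp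
      qed
    qed simp
    have "integral\<^sup>L \<nu> (\<lambda>x. ff \<alpha> (p x) (r x)) \<le> integral\<^sup>L \<nu> (\<lambda>x. \<theta> * exp (\<theta> * B - B) * ff lam (p x) (r x) + (1 - \<theta>) * exp (\<theta> * B) * p x)"
      using ia ib bnd by (rule integral_mono_AE)
    also have "\<dots> = \<theta> * exp (\<theta> * B - B) * A + (1 - \<theta>) * exp (\<theta> * B)"
      using ilam ip by (simp add: A_def)
    also have "\<theta> * exp (\<theta> * B - B) * A + (1 - \<theta>) * exp (\<theta> * B) = exp (\<theta> * B)"
    proof -
      have "exp (\<theta> * B - B) * A = exp (\<theta> * B)" using Apos by (simp add: B_def exp_diff)
      hence "\<theta> * exp (\<theta> * B - B) * A = \<theta> * exp (\<theta> * B)" by (simp add: mult.assoc)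
      thus ?thesis by (simp add: ring_distribs)
    qed
    also have "exp (\<theta> * B) \<le> exp ((\<alpha> - 1) * \<gamma>)"
    proof -
      have "\<theta> * B \<le> \<theta> * ((lam - 1) * \<gamma>)" using lnA th by (simp add: B_def mult_left_mono)
      also have "\<dots> = (\<alpha> - 1) * \<gamma>" using assms(9) by (simp add: \<theta>_def)
      finally show ?thesis by simp
    qed
    finally show ?thesis using ia by simp
  qed
  define \<tau> where "\<tau> = min ((lam - \<eta>) * \<gamma> / 2) 1"
  define a where "a = \<eta> - 1"
  define s where "s = 2 * \<tau> / \<gamma>"
  have tpos: "0 < \<tau>" using assms by (simp add: \<tau>_def)
  have spos: "0 < s" using tpos assms by (simp add: s_def)
  have apos: "0 < a" using assms by (simp add: a_def)
  have sle: "s \<le> lam - \<eta>"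
  proof -
    have "\<tau> \<le> (lam - \<eta>) * \<gamma> / 2" by (simp add: \<tau>_def)
    thus ?thesis using assms(8) by (simp add: s_def field_simps)
  qed
  obtain ieta: "integrable \<nu> (\<lambda>x. ff \<eta> (p x) (r x))" using mid[of \<eta>] assms by auto
  obtain ies: "integrable \<nu> (\<lambda>x. ff (\<eta> + s) (p x) (r x))"
    and les: "integral\<^sup>L \<nu> (\<lambda>x. ff (\<eta> + s) (p x) (r x)) \<le> exp ((\<eta> + s - 1) * \<gamma>)"
    using mid[of "\<eta> + s"] assms spos sle by auto
  define E where "E = integral\<^sup>L \<nu> (\<lambda>x. ff \<eta> (p x) (r x))"
  have Elow: "exp (a * D1) \<le> E" using lower[OF ieta] by (simp add: E_def a_def)
  have Epos: "0 < E" using Elow by (smt (verit) exp_gt_zero)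
  have rdeta: "renyi_div \<eta> \<nu> w q = ereal (ln E / a)"
    using rdI[OF assms(11) ieta] Epos by (simp add: E_def a_def)
  have "integral\<^sup>L \<nu> (\<lambda>x. ff \<eta> (p x) (r x) - p x - a * kk (p x) (r x))
     \<le> integral\<^sup>L \<nu> (\<lambda>x. a^2 * (2 / exp 1 ^ 2) * r x + a^2 * (2 / (s^2 * exp 1 ^ 2)) * ff (\<eta> + s) (p x) (r x))"
  proof (rule integral_mono_AE)
    show "integrable \<nu> (\<lambda>x. ff \<eta> (p x) (r x) - p x - a * kk (p x) (r x))" using ieta ip ik by auto
    show "integrable \<nu> (\<lambda>x. a^2 * (2 / exp 1 ^ 2) * r x + a^2 * (2 / (s^2 * exp 1 ^ 2)) * ff (\<eta> + s) (p x) (r x))"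
      using ir ies by auto
    show "AE x in \<nu>. ff \<eta> (p x) (r x) - p x - a * kk (p x) (r x)
       \<le> a^2 * (2 / exp 1 ^ 2) * r x + a^2 * (2 / (s^2 * exp 1 ^ 2)) * ff (\<eta> + s) (p x) (r x)"
      using pr
    proof eventually_elim
      case (elim x) thus ?case using pw_upper[of "p x" "r x" a s] p0[of x] apos spos by (simp add: a_def)
    qed
  qed
  hence up: "E - 1 - a * D1 \<le> a^2 * (2 / exp 1 ^ 2) + a^2 * (2 / (s^2 * exp 1 ^ 2)) * integral\<^sup>L \<nu> (\<lambda>x. ff (\<eta> + s) (p x) (r x))"
    using ieta ip ik ir ies by (simp add: E_def D1_def)
  have key: "ln E / a - D1 \<le> 2 * a / exp 2 * (1 + exp (a * \<gamma>) * (\<gamma> * exp \<tau> / (2 * \<tau>))\<^sup>2)"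
  proof -
    have "ln E \<le> E - 1" using Epos by (rule ln_le_minus_one)
    have e2: "exp 1 ^ 2 = exp (2::real)" by (simp add: power2_eq_square flip: exp_add)
    have "exp ((\<eta> + s - 1) * \<gamma>) / s^2 = exp (a * \<gamma>) * (\<gamma> * exp \<tau> / (2 * \<tau>))\<^sup>2"
    proof -
      have "(\<eta> + s - 1) * \<gamma> = a * \<gamma> + \<tau> + \<tau>" using assms(8) by (simp add: a_def s_def field_simps)
      moreover have "exp (a * \<gamma> + \<tau> + \<tau>) = exp (a * \<gamma>) * exp \<tau> * exp \<tau>" by (simp only: exp_add)
      ultimately have e1: "exp ((\<eta> + s - 1) * \<gamma>) = exp (a * \<gamma>) * (exp \<tau>)^2"
        by (simp add: power2_eq_square)
      have "(exp \<tau>)^2 / s^2 = (\<gamma> * exp \<tau> / (2 * \<tau>))\<^sup>2"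
        using assms(8) tpos by (simp add: s_def power_divide power_mult_distrib)
      thus ?thesis unfolding e1 by (metis times_divide_eq_right)
    qed
    have "a^2 * (2 / (s^2 * exp 1 ^ 2)) * integral\<^sup>L \<nu> (\<lambda>x. ff (\<eta> + s) (p x) (r x))
        \<le> a^2 * (2 / (s^2 * exp 1 ^ 2)) * exp ((\<eta> + s - 1) * \<gamma>)"
      using les by (intro mult_left_mono) auto
    moreover have "a^2 * (2 / (s^2 * exp 1 ^ 2)) * exp ((\<eta> + s - 1) * \<gamma>) = a^2 * (2 / exp 1 ^ 2) * (exp ((\<eta> + s - 1) * \<gamma>) / s^2)"
      by simp
    ultimately have "ln E \<le> a * D1 + a^2 * (2 / exp 1 ^ 2) + a^2 * (2 / exp 1 ^ 2) * (exp ((\<eta> + s - 1) * \<gamma>) / s^2)"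
      using up \<open>ln E \<le> E - 1\<close> by linarith
    also have "\<dots> = a * D1 + a * (2 * a / exp 2 * (1 + exp (a * \<gamma>) * (\<gamma> * exp \<tau> / (2 * \<tau>))\<^sup>2))"
      unfolding \<open>exp ((\<eta> + s - 1) * \<gamma>) / s^2 = _\<close> e2 by (rule alg_helper)
    finally show ?thesis using apos by (simp add: field_simps)
  qed
  have low: "D1 \<le> ln E / a"
  proof -
    have "a * D1 \<le> ln E" using Elow Epos by (metis ln_exp ln_le_cancel_iff exp_gt_zero)
    thus ?thesis using apos by (simp add: field_simps)
  qed
  have diff: "renyi_div \<eta> \<nu> w q - renyi_div 1 \<nu> w q = ereal (ln E / a - D1)"
    unfolding rdeta rd1 by simp
  have bnd: "(let \<tau> = min ((lam - \<eta>) * \<gamma> / 2) 1 in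
             2 * (\<eta> - 1) / exp 2 * (1 + exp ((\<eta> - 1) * \<gamma>) * (\<gamma> * exp \<tau> / (2 * \<tau>))\<^sup>2))
     = 2 * a / exp 2 * (1 + exp (a * \<gamma>) * (\<gamma> * exp \<tau> / (2 * \<tau>))\<^sup>2)"
    unfolding Let_def \<tau>_def a_def by (rule refl)
  have "0 \<le> ln E / a - D1" using low by simp
  thus ?thesis unfolding diff bnd using key by simp
qed

end
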